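(* Let ${\mathcal M}:{\mathbb E}\to{\mathbb F}$ be a surjective linear map between finite-dimensional Euclidean spaces, $\mathcal{K}\subseteq{\mathbb E}$ a convex cone, $b\in{\mathbb F}$, and suppose ${\mathcal F}=\{X\in\mathcal{K}:{\mathcal M}(X)=b\}\neq\emptyset$. Then the singularity degree of the system ${\mathcal F}$ over $\mathcal{K}$ equals the singularity degree of the face $\operatorname{face}(b,{\mathcal M}(\mathcal{K}))$ over the cone ${\mathcal M}(\mathcal{K})$. *)

theory Defs
  imports "HOL-Analysis.Analysis"
begin

definition dualcone :: "'a::real_inner set \<Rightarrow> 'a set" where
  "dualcone S = {y. \<forall>x\<in>S. inner x y \<ge> 0}"

definition minface :: "'a::real_vector set \<Rightarrow> 'a set \<Rightarrow> 'a set" where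
  "minface K S = \<Inter>{T. T face_of K \<and> S \<subseteq> T}"

fun face_chain :: "'a::real_inner set \<Rightarrow> (nat \<Rightarrow> 'a) \<Rightarrow> nat \<Rightarrow> 'a set" where
  "face_chain C z 0 = C"
| "face_chain C z (Suc i) = face_chain C z i \<inter> {x. inner (z i) x = 0}"

definition sd_face :: "'a::real_inner set \<Rightarrow> 'a set \<Rightarrow> nat" where
  "sd_face C f = (LEAST k. \<exists>z. (\<forall>i<k. z i \<in> dualcone (face_chain C z i))
                               \<and> face_chain C z k = f)"

text \<open>Facial reduction chain for the system {X in K. M X = b}:
  K_0 = K, K_(i+1) = K_i intersected with the orthogonal complement of M^* (y i).\<close>
fun sys_chain :: "('a::real_inner \<Rightarrow> 'b::real_inner) \<Rightarrow> 'a set \<Rightarrow> (nat \<Rightarrow> 'b) \<Rightarrow> nat \<Rightarrow> 'a set" where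
  "sys_chain M K y 0 = K"
| "sys_chain M K y (Suc i) = sys_chain M K y i \<inter> {x. inner (M x) (y i) = 0}"

definition sd_sys :: "('a::real_inner \<Rightarrow> 'b::real_inner) \<Rightarrow> 'a set \<Rightarrow> 'b \<Rightarrow> nat" where
  "sd_sys M K b = (LEAST k. \<exists>y.
      (\<forall>i<k. (\<forall>x\<in>sys_chain M K y i. inner (M x) (y i) \<ge> 0) \<and> inner b (y i) = 0)
      \<and> sys_chain M K y k = minface K {X\<in>K. M X = b})"

end

theory Submission
  imports Defs
begin

definition Dset :: "'a::real_vector set \<Rightarrow> 'a \<Rightarrow> 'a set" where
  "Dset S p = {c\<in>S. \<exists>\<alpha>>0. p - \<alpha> *\<^sub>R c \<in> S}"

lemma shrink:
  assumes "convex_cone S" "p \<in> S" "p - a *\<^sub>R c \<in> S" "0 < a'" "a' \<le> a"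
  shows "p - a' *\<^sub>R c \<in> S"
proof -
  have a: "a > 0" using assms by simp
  have "p - a' *\<^sub>R c = (a'/a) *\<^sub>R (p - a *\<^sub>R c) + (1 - a'/a) *\<^sub>R p"
    using a by (simp add: algebra_simps)
  also have "\<dots> \<in> S"
    using assms a by (intro convex_cone_add convex_cone_scaleR) auto
  finally show ?thesis .
qed

lemma absorb:
  assumes S: "convex_cone S" and T: "T face_of S" and pT: "p \<in> T" and yS: "y \<in> S"
    and b: "\<beta> > 0" and q: "p - \<beta> *\<^sub>R y \<in> S"
  shows "y \<in> T"
proof -
  define b' where "b' = min \<beta> (1/2)"
  have b': "0 < b'" "b' \<le> \<beta>" "b' < 1" using b by (auto simp: b'_def)
  have pS: "p \<in> S" using T pT face_of_imp_subset by blast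
  have q': "p - b' *\<^sub>R y \<in> S" using shrink[OF S pS q b'(1,2)] .
  define v where "v = (1/(1-b')) *\<^sub>R (p - b' *\<^sub>R y)"
  have vS: "v \<in> S" unfolding v_def using b' q' by (intro convex_cone_scaleR[OF S]) auto
  have v1: "(1-b') *\<^sub>R v = p - b' *\<^sub>R y" using b' by (simp add: v_def)
  have pv: "p = (1 - (1-b')) *\<^sub>R y + (1-b') *\<^sub>R v"
    unfolding v1 by simp
  show ?thesis
  proof (cases "y = v")
    case True
    then have "p = y" using pv by (simp add: algebra_simps)
    then show ?thesis using pT by simp
  next
    case False
    then have "p \<in> open_segment y v" unfolding in_segment using b' pv
      by (intro conjI exI[of _ "1-b'"]) auto
    then show ?thesis using T yS vS pT unfolding face_of_def by blast
  qed
qed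

lemma Dset_face:
  assumes S: "convex_cone S" and p: "p \<in> S"
  shows "Dset S p face_of S"
proof -
  have sub: "Dset S p \<subseteq> S" by (auto simp: Dset_def)
  have conv: "convex (Dset S p)"
    unfolding convex_def
  proof (intro ballI allI impI)
    fix x y and u v :: real
    assume x: "x \<in> Dset S p" and y: "y \<in> Dset S p" and uv: "0 \<le> u" "0 \<le> v" "u + v = 1"
    obtain a1 where a1: "a1 > 0" "p - a1 *\<^sub>R x \<in> S" "x \<in> S" using x by (auto simp: Dset_def)
    obtain a2 where a2: "a2 > 0" "p - a2 *\<^sub>R y \<in> S" "y \<in> S" using y by (auto simp: Dset_def)
    define a where "a = min a1 a2"
    have h1: "p - a *\<^sub>R x \<in> S" using shrink[OF S p a1(2)] a1 a2 by (simp add: a_def)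
    have h2: "p - a *\<^sub>R y \<in> S" using shrink[OF S p a2(2)] a1 a2 by (simp add: a_def)
    have eq: "p - a *\<^sub>R (u *\<^sub>R x + v *\<^sub>R y) = u *\<^sub>R (p - a *\<^sub>R x) + v *\<^sub>R (p - a *\<^sub>R y)"
    proof -
      have "p = u *\<^sub>R p + v *\<^sub>R p" using uv by (simp add: scaleR_left_distrib[symmetric])
      then show ?thesis by (simp add: algebra_simps)
    qed
    have "p - a *\<^sub>R (u *\<^sub>R x + v *\<^sub>R y) \<in> S"
      unfolding eq using uv h1 h2 by (intro convex_cone_add[OF S] convex_cone_scaleR[OF S]) auto
    moreover have "u *\<^sub>R x + v *\<^sub>R y \<in> S"
      using uv a1 a2 by (intro convex_cone_add[OF S] convex_cone_scaleR[OF S]) auto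
    moreover have "a > 0" using a1 a2 by (simp add: a_def)
    ultimately show "u *\<^sub>R x + v *\<^sub>R y \<in> Dset S p" by (auto simp: Dset_def)
  qed
  have ext: "\<forall>a\<in>S. \<forall>d\<in>S. \<forall>x\<in>Dset S p. x \<in> open_segment a d \<longrightarrow> a \<in> Dset S p \<and> d \<in> Dset S p"
  proof (intro ballI impI)
    fix a d x
    assume aS: "a \<in> S" and dS: "d \<in> S" and x: "x \<in> Dset S p" and seg: "x \<in> open_segment a d"
    obtain al where al: "al > 0" "p - al *\<^sub>R x \<in> S" using x by (auto simp: Dset_def)
    obtain u where u: "0 < u" "u < 1" "x = (1 - u) *\<^sub>R a + u *\<^sub>R d" using seg unfolding in_segment by blast
    have "p - (al * (1-u)) *\<^sub>R a = (p - al *\<^sub>R x) + (al * u) *\<^sub>R d"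
      unfolding u(3) by (simp add: algebra_simps)
    also have "\<dots> \<in> S" using al u dS by (intro convex_cone_add[OF S] convex_cone_scaleR[OF S]) auto
    finally have A: "a \<in> Dset S p" using aS al u unfolding Dset_def
      by (auto intro!: exI[of _ "al * (1-u)"])
    have "p - (al * u) *\<^sub>R d = (p - al *\<^sub>R x) + (al * (1-u)) *\<^sub>R a"
      unfolding u(3) by (simp add: algebra_simps)
    also have "\<dots> \<in> S" using al u aS by (intro convex_cone_add[OF S] convex_cone_scaleR[OF S]) auto
    finally have D: "d \<in> Dset S p" using dS al u unfolding Dset_def
      by (auto intro!: exI[of _ "al * u"])
    show "a \<in> Dset S p \<and> d \<in> Dset S p" using A D by blast
  qed
  show ?thesis unfolding face_of_def using sub conv ext by blast
qed

lemma p_in_Dset: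
  assumes S: "convex_cone S" and p: "p \<in> S"
  shows "p \<in> Dset S p"
proof -
  have "p - (1/2) *\<^sub>R p = (1 - 1/2) *\<^sub>R p" by (metis scaleR_left_diff_distrib scaleR_one)
  also have "\<dots> = (1/2) *\<^sub>R p" by simp
  also have "\<dots> \<in> S" using convex_cone_scaleR[OF S _ p] by simp
  finally show ?thesis using p unfolding Dset_def by (auto intro!: exI[of _ "1/2"])
qed

lemma minface_point:
  assumes S: "convex_cone S" and p: "p \<in> S"
  shows "minface S {p} = Dset S p"
proof
  show "minface S {p} \<subseteq> Dset S p"
    unfolding minface_def using Dset_face[OF S p] p_in_Dset[OF S p] by blast
  show "Dset S p \<subseteq> minface S {p}"
    unfolding minface_def
  proof (intro subsetI InterI)
    fix c T assume c: "c \<in> Dset S p" and T: "T \<in> {T. T face_of S \<and> {p} \<subseteq> T}"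
    obtain a where "a > 0" "p - a *\<^sub>R c \<in> S" "c \<in> S" using c by (auto simp: Dset_def)
    then show "c \<in> T" using absorb[OF S, of T p c a] T by auto
  qed
qed

lemma sys_chain_eq:
  "sys_chain M K z i = {x\<in>K. M x \<in> face_chain (M ` K) z i}"
  by (induction i) (auto simp: inner_commute)

lemma face_chain_sub: "face_chain C z i \<subseteq> C"
  by (induction i) auto

lemma sys_chain_image: "M ` sys_chain M K z i = face_chain (M ` K) z i"
  using face_chain_sub[of "M ` K" z i] unfolding sys_chain_eq by blast

lemma face_chain_mono: "i \<le> j \<Longrightarrow> face_chain C z j \<subseteq> face_chain C z i"
  by (induction j) (auto simp: le_Suc_eq)

lemma key:
  fixes M :: "'a::euclidean_space \<Rightarrow> 'b::euclidean_space"
  assumes lin: "linear M" and K: "convex_cone K" and ne: "{X\<in>K. M X = b} \<noteq> {}"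
  shows "minface K {X\<in>K. M X = b} = {x\<in>K. M x \<in> minface (M ` K) {b}}"
proof -
  define F where "F = {X\<in>K. M X = b}"
  have C: "convex_cone (M ` K)" using convex_cone_linear_image K lin by blast
  have convF: "convex F"
    unfolding convex_def F_def
  proof (intro ballI allI impI)
    fix x y and u v :: real
    assume x: "x \<in> {X \<in> K. M X = b}" and y: "y \<in> {X \<in> K. M X = b}" and uv: "0 \<le> u" "0 \<le> v" "u + v = 1"
    have "M (u *\<^sub>R x + v *\<^sub>R y) = (u + v) *\<^sub>R b"
      using x y by (simp add: linear_add[OF lin] linear_scale[OF lin] scaleR_add_left)
    moreover have "u *\<^sub>R x + v *\<^sub>R y \<in> K" using x y uv
      by (intro convex_cone_add[OF K] convex_cone_scaleR[OF K]) auto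
    ultimately show "u *\<^sub>R x + v *\<^sub>R y \<in> {X \<in> K. M X = b}" using uv by simp
  qed
  have neF: "F \<noteq> {}" using ne F_def by simp
  obtain x0 where x0: "x0 \<in> rel_interior F"
    using rel_interior_eq_empty[OF convF] neF by blast
  have ri: "\<And>x. x \<in> F \<Longrightarrow> \<exists>e>1. (1 - e) *\<^sub>R x + e *\<^sub>R x0 \<in> F"
    using convex_rel_interior_iff[OF convF neF] x0 by blast
  have x0F: "x0 \<in> F" using x0 rel_interior_subset by blast
  then have x0K: "x0 \<in> K" and Mx0: "M x0 = b" by (auto simp: F_def)
  have bC: "b \<in> M ` K" using x0K Mx0 by blast
  have H1: "minface K F = Dset K x0"
  proof
    have "F \<subseteq> Dset K x0"
    proof
      fix x assume xF: "x \<in> F"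
      obtain e where e: "e > 1" "(1 - e) *\<^sub>R x + e *\<^sub>R x0 \<in> F" using ri[OF xF] by blast
      have h: "1/e + (e-1)/e = 1" using e by (simp add: field_simps)
      have s: "(1/e) *\<^sub>R x + ((e-1)/e) *\<^sub>R x = x" by (metis h scaleR_add_left scaleR_one)
      have "x0 - ((e-1)/e) *\<^sub>R x = (1/e) *\<^sub>R ((1 - e) *\<^sub>R x + e *\<^sub>R x0)"
        using e s by (simp add: algebra_simps divide_simps)
      also have "\<dots> \<in> K" using e by (intro convex_cone_scaleR[OF K]) (auto simp: F_def)
      finally show "x \<in> Dset K x0" using xF e unfolding Dset_def F_def
        by (auto intro!: exI[of _ "(e-1)/e"])
    qed
    then show "minface K F \<subseteq> Dset K x0"
      unfolding minface_def using Dset_face[OF K x0K] by blast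
    show "Dset K x0 \<subseteq> minface K F"
      unfolding minface_def
    proof (intro subsetI InterI)
      fix c T assume c: "c \<in> Dset K x0" and T: "T \<in> {T. T face_of K \<and> F \<subseteq> T}"
      obtain a where "a > 0" "x0 - a *\<^sub>R c \<in> K" "c \<in> K" using c by (auto simp: Dset_def)
      then show "c \<in> T" using absorb[OF K, of T x0 c a] T x0F by auto
    qed
  qed
  have H2: "minface (M ` K) {b} = Dset (M ` K) b" using minface_point[OF C bC] .
  have H3: "Dset K x0 = {y\<in>K. M y \<in> Dset (M ` K) b}"
  proof
    show "Dset K x0 \<subseteq> {y\<in>K. M y \<in> Dset (M ` K) b}"
    proof
      fix y assume "y \<in> Dset K x0"
      then obtain a where a: "a > 0" "x0 - a *\<^sub>R y \<in> K" "y \<in> K" by (auto simp: Dset_def)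
      have "b - a *\<^sub>R M y = M (x0 - a *\<^sub>R y)" using Mx0 by (simp add: linear_diff[OF lin] linear_scale[OF lin])
      then have "b - a *\<^sub>R M y \<in> M ` K" using a by simp
      then show "y \<in> {y\<in>K. M y \<in> Dset (M ` K) b}" using a unfolding Dset_def by auto
    qed
    show "{y\<in>K. M y \<in> Dset (M ` K) b} \<subseteq> Dset K x0"
    proof
      fix y assume y: "y \<in> {y\<in>K. M y \<in> Dset (M ` K) b}"
      then obtain a where a: "a > 0" "b - a *\<^sub>R M y \<in> M ` K" "y \<in> K" by (auto simp: Dset_def)
      then obtain w where w: "w \<in> K" "M w = b - a *\<^sub>R M y" by auto
      define x' where "x' = w + a *\<^sub>R y"
      have x'F: "x' \<in> F" unfolding F_def x'_def using w a
        by (auto simp: linear_add[OF lin] linear_scale[OF lin] intro!: convex_cone_add[OF K] convex_cone_scaleR[OF K])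
      obtain e where e: "e > 1" "(1 - e) *\<^sub>R x' + e *\<^sub>R x0 \<in> F" using ri[OF x'F] by blast
      define x'' where "x'' = (1 - e) *\<^sub>R x' + e *\<^sub>R x0"
      have h1: "1/e + (e-1)/e = 1" using e by (simp add: field_simps)
      have s1: "(1/e) *\<^sub>R w + ((e-1)/e) *\<^sub>R w = w" by (metis h1 scaleR_add_left scaleR_one)
      have h2: "a/e + (a*e-a)/e = a" using e by (simp add: field_simps)
      have s2: "(a/e) *\<^sub>R y + ((a*e-a)/e) *\<^sub>R y = a *\<^sub>R y" by (metis h2 scaleR_add_left)
      have id: "x0 - ((e-1)*a/e) *\<^sub>R y = (1/e) *\<^sub>R x'' + ((e-1)/e) *\<^sub>R w"
        using e apply (simp add: x''_def x'_def algebra_simps divide_simps)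
        using s1 s2 by (metis add.assoc add.left_commute)
      have x''K: "x'' \<in> K" using e(2) by (simp add: F_def x''_def)
      have "(1/e) *\<^sub>R x'' \<in> K" "((e-1)/e) *\<^sub>R w \<in> K"
        using e w x''K by (auto intro!: convex_cone_scaleR[OF K])
      then have "(1/e) *\<^sub>R x'' + ((e-1)/e) *\<^sub>R w \<in> K" by (rule convex_cone_add[OF K])
      then have "x0 - ((e-1)*a/e) *\<^sub>R y \<in> K" by (simp only: id)
      then show "y \<in> Dset K x0" using a e unfolding Dset_def
        by (auto intro!: exI[of _ "(e-1)*a/e"])
    qed
  qed
  show ?thesis using H1 H2 H3 F_def by simp
qed

theorem mainTheorem6:
  fixes M :: "'a::euclidean_space \<Rightarrow> 'b::euclidean_space"
    and K :: "'a set" and b :: 'b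
  assumes "linear M" and "surj M"
    and "convex_cone K"
    and "{X\<in>K. M X = b} \<noteq> {}"
  shows "sd_sys M K b = sd_face (M ` K) (minface (M ` K) {b})"
proof -
  define G where "G = minface (M ` K) {b}"
  have keyG: "minface K {X\<in>K. M X = b} = {x\<in>K. M x \<in> G}"
    using key[OF assms(1,3,4)] G_def by simp
  obtain x0 where x0: "x0 \<in> K" "M x0 = b" using assms(4) by blast
  have C: "convex_cone (M ` K)" using convex_cone_linear_image assms by blast
  have bG: "b \<in> G" unfolding G_def using minface_point[OF C] p_in_Dset[OF C] x0 by blast
  have GC: "G \<subseteq> M ` K" unfolding G_def using minface_point[OF C] x0 by (auto simp: Dset_def)
  have A: "\<And>y i. (\<forall>x\<in>sys_chain M K y i. inner (M x) (y i) \<ge> 0) \<longleftrightarrow> y i \<in> dualcone (face_chain (M ` K) y i)"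
  proof -
    fix y i
    have "(\<forall>x\<in>sys_chain M K y i. inner (M x) (y i) \<ge> 0) \<longleftrightarrow> (\<forall>c\<in>M ` sys_chain M K y i. inner c (y i) \<ge> 0)"
      by blast
    then show "?thesis y i" unfolding sys_chain_image dualcone_def by simp
  qed
  have B: "\<And>y k. sys_chain M K y k = {x\<in>K. M x \<in> G} \<longleftrightarrow> face_chain (M ` K) y k = G"
  proof -
    fix y k
    show "?thesis y k"
    proof
      assume h: "sys_chain M K y k = {x\<in>K. M x \<in> G}"
      have "M ` {x\<in>K. M x \<in> G} = G" using GC by blast
      then show "face_chain (M ` K) y k = G" using h sys_chain_image[of M K y k] by simp
    next
      assume "face_chain (M ` K) y k = G"
      then show "sys_chain M K y k = {x\<in>K. M x \<in> G}" by (simp add: sys_chain_eq)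
    qed
  qed
  have Cc: "\<And>y k i. face_chain (M ` K) y k = G \<Longrightarrow> i < k \<Longrightarrow> inner b (y i) = 0"
  proof -
    fix y k i assume h: "face_chain (M ` K) y k = G" "i < k"
    then have "b \<in> face_chain (M ` K) y (Suc i)" using face_chain_mono[of "Suc i" k] bG by auto
    then show "inner b (y i) = 0" by (simp add: inner_commute)
  qed
  have eq: "\<And>k. (\<exists>y. (\<forall>i<k. (\<forall>x\<in>sys_chain M K y i. inner (M x) (y i) \<ge> 0) \<and> inner b (y i) = 0)
                 \<and> sys_chain M K y k = minface K {X\<in>K. M X = b})
         \<longleftrightarrow> (\<exists>z. (\<forall>i<k. z i \<in> dualcone (face_chain (M ` K) z i)) \<and> face_chain (M ` K) z k = G)"
    unfolding keyG A B using Cc by blast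
  show ?thesis unfolding sd_sys_def sd_face_def G_def[symmetric] eq ..
qed

end
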